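(* There is a deterministic distributed algorithm in the CONGEST model which, given an $n$-vertex graph $G=(V,E,w)$ with positive edge weights and a parameter $\epsilon\in(0,1)$, computes a weighted $\epsilon$-defective coloring of $G$ using $O(\epsilon^{-2})$ colors, in $O(\log^* n)$ communication rounds.
   Context: CONGEST model: the network is the graph $G$, vertices have unique identifiers from $\{1,\dots,n\}$ and are processors, and in each synchronous round every vertex sends a message of $O(\log n)$ bits to each neighbour; complexity is the number of rounds. For a coloring $\varphi:V\to[c]$ of a positively edge-weighted graph, let $E_m(v)$ be the set of monochromatic edges at $v$ (edges $(u,v)$ with $\varphi(u)=\varphi(v)$), $defect_w(v)=\sum_{e\in E_m(v)}w(e)$ and $w(v)=\sum_{e\ni v}w(e)$. The coloring is a weighted $\epsilon$-defective coloring if $defect_w(v)\le \epsilon\, w(v)$ for every $v\in V$. *)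

theory Defs
  imports Complex_Main
begin

definition log_star :: "nat \<Rightarrow> nat" where
  "log_star n = (LEAST i. ((\<lambda>x. log 2 x) ^^ i) (real n) \<le> 1)"

text \<open>An n-vertex graph with positive edge weights on vertex set {1..n}, given by a
  symmetric weight function: u,v adjacent iff w u v > 0; no self-loops; weight 0 means
  non-edge.\<close>
definition weighted_graph :: "nat \<Rightarrow> (nat \<Rightarrow> nat \<Rightarrow> real) \<Rightarrow> bool" where
  "weighted_graph n w \<longleftrightarrow>
     (\<forall>u v. w u v = w v u) \<and> (\<forall>u v. 0 \<le> w u v) \<and> (\<forall>v. w v v = 0) \<and>
     (\<forall>u v. w u v \<noteq> 0 \<longrightarrow> u \<in> {1..n} \<and> v \<in> {1..n})"

definition wdeg :: "nat \<Rightarrow> (nat \<Rightarrow> nat \<Rightarrow> real) \<Rightarrow> nat \<Rightarrow> real" where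
  "wdeg n w v = (\<Sum>u\<in>{1..n}. w v u)"

definition wdefect :: "nat \<Rightarrow> (nat \<Rightarrow> nat \<Rightarrow> real) \<Rightarrow> (nat \<Rightarrow> nat) \<Rightarrow> nat \<Rightarrow> real" where
  "wdefect n w \<phi> v = (\<Sum>u\<in>{u\<in>{1..n}. \<phi> u = \<phi> v}. w v u)"

definition weighted_defective_coloring ::
  "nat \<Rightarrow> (nat \<Rightarrow> nat \<Rightarrow> real) \<Rightarrow> real \<Rightarrow> (nat \<Rightarrow> nat) \<Rightarrow> bool" where
  "weighted_defective_coloring n w \<epsilon> \<phi> \<longleftrightarrow>
     (\<forall>v\<in>{1..n}. wdefect n w \<phi> v \<le> \<epsilon> * wdeg n w v)"

text \<open>In each round, vertex u sends to neighbour v the message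
  send n eps (state of u) v (a natural number); v then updates its state from its old
  state and the received messages (indexed by sender; non-neighbours contribute 0).\<close>
primrec congest_state ::
  "(nat \<Rightarrow> real \<Rightarrow> nat \<Rightarrow> (nat \<Rightarrow> real) \<Rightarrow> 's) \<Rightarrow>
   (nat \<Rightarrow> real \<Rightarrow> 's \<Rightarrow> nat \<Rightarrow> nat) \<Rightarrow>
   (nat \<Rightarrow> real \<Rightarrow> 's \<Rightarrow> (nat \<Rightarrow> nat) \<Rightarrow> 's) \<Rightarrow>
   nat \<Rightarrow> real \<Rightarrow> (nat \<Rightarrow> nat \<Rightarrow> real) \<Rightarrow> nat \<Rightarrow> nat \<Rightarrow> 's" where
  "congest_state init send upd n \<epsilon> w 0 v = init n \<epsilon> v (\<lambda>u. w v u)"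
| "congest_state init send upd n \<epsilon> w (Suc t) v =
     upd n \<epsilon> (congest_state init send upd n \<epsilon> w t v)
       (\<lambda>u. if 0 < w u v then send n \<epsilon> (congest_state init send upd n \<epsilon> w t u) v else 0)"

end

theory Submission
  imports Defs "HOL-Computational_Algebra.Computational_Algebra"
begin


lemma pow_gt_exp: "prime (p::nat) \<Longrightarrow> k < p ^ k"
proof -
  assume "prime p" then have "2 \<le> p" by (simp add: prime_ge_2_nat)
  have "k < 2 ^ k" by (rule less_exp)
  also have "2 ^ k \<le> p ^ k" using \<open>2 \<le> p\<close> by (simp add: power_mono)
  finally show ?thesis .
qed

lemma mult_le_self: assumes "prime (p::nat)" "x > 0" shows "multiplicity p x < x"
proof -
  have "p ^ multiplicity p x dvd x" by (simp add: multiplicity_dvd)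
  then have "p ^ multiplicity p x \<le> x" using assms by (simp add: dvd_imp_le)
  with pow_gt_exp[OF assms(1)] show ?thesis by (meson order.strict_trans2)
qed

lemma mult_card: assumes p: "prime (p::nat)"
  shows "multiplicity p (Suc m) = card {i \<in> {1..Suc m}. p ^ i dvd Suc m}"
proof -
  have "{i \<in> {1..Suc m}. p ^ i dvd Suc m} = {1..multiplicity p (Suc m)}"
  proof -
    have pd: "\<And>n. p ^ n dvd Suc m \<longleftrightarrow> n \<le> multiplicity p (Suc m)"
      using power_dvd_iff_le_multiplicity[of "Suc m" p] prime_gt_1_nat[OF p] by simp
    show ?thesis using mult_le_self[OF p, of "Suc m"] by (auto simp: pd)
  qed
  then show ?thesis by simp
qed

lemma sum_ind_card: "finite A \<Longrightarrow> (\<Sum>i\<in>A. if P i then 1 else 0::nat) = card {i\<in>A. P i}"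
  by (simp add: sum.If_cases Int_def)

lemma Suc_div_ind: "0 < (k::nat) \<Longrightarrow> Suc m div k = m div k + (if k dvd Suc m then 1 else 0)"
  by (simp add: div_Suc dvd_eq_mod_eq_0)

lemma legendre: assumes p: "prime (p::nat)"
  shows "multiplicity p (fact m) = (\<Sum>i\<in>{1..m}. m div p ^ i)"
proof (induction m)
  case 0 then show ?case by simp
next
  case (Suc m)
  have pos: "\<And>i. 0 < p ^ i" using p prime_gt_0_nat by simp
  have fs: "(fact (Suc m) :: nat) = Suc m * fact m" by (metis fact_Suc of_nat_id)
  have "multiplicity p (fact (Suc m) :: nat) = multiplicity p (Suc m) + multiplicity p (fact m :: nat)"
    unfolding fs using p by (intro prime_elem_multiplicity_mult_distrib) auto
  also have "\<dots> = card {i \<in> {1..Suc m}. p ^ i dvd Suc m} + (\<Sum>i\<in>{1..m}. m div p ^ i)"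
    using Suc mult_card[OF p] by simp
  also have "(\<Sum>i\<in>{1..m}. m div p ^ i) = (\<Sum>i\<in>{1..Suc m}. m div p ^ i)"
  proof -
    have "m div p ^ Suc m = 0" using pow_gt_exp[OF p, of "Suc m"] by simp
    then show ?thesis by simp
  qed
  also have "card {i \<in> {1..Suc m}. p ^ i dvd Suc m} = (\<Sum>i\<in>{1..Suc m}. (if p ^ i dvd Suc m then 1 else 0))"
    by (simp only: sum_ind_card finite_atLeastAtMost)
  also have "\<dots> + (\<Sum>i\<in>{1..Suc m}. m div p ^ i) = (\<Sum>i\<in>{1..Suc m}. Suc m div p ^ i)"
  proof -
    have "\<And>i. Suc m div p ^ i = (if p ^ i dvd Suc m then 1 else 0) + m div p ^ i"
      using Suc_div_ind[OF pos] by simp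
    then show ?thesis by (simp only: sum.distrib)
  qed
  finally show ?case .
qed

lemma central_binom_mult: assumes p: "prime (p::nat)" and N: "N > 0"
  shows "p ^ multiplicity p ((2*N) choose N) \<le> 2 * N"
proof (rule ccontr)
  let ?e = "multiplicity p ((2*N) choose N)"
  assume "\<not> ?thesis" then have big: "2*N < p ^ ?e" by simp
  have fe: "fact (2*N) = ((2*N) choose N) * fact N * (fact N :: nat)"
    using binomial_fact_lemma[of N "2*N"] by (simp add: mult_2 algebra_simps)
  have "multiplicity p (fact (2*N) :: nat) = ?e + 2 * multiplicity p (fact N :: nat)"
    using p by (simp add: fe prime_elem_multiplicity_mult_distrib)
  then have eq: "?e = (\<Sum>i\<in>{1..2*N}. 2*N div p ^ i) - 2 * (\<Sum>i\<in>{1..N}. N div p ^ i)"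
    using legendre[OF p] by simp
  have "(\<Sum>i\<in>{1..N}. N div p ^ i) = (\<Sum>i\<in>{1..2*N}. N div p ^ i)"
  proof -
    have "\<forall>i\<in>{1..2*N} - {1..N}. N div p ^ i = 0"
    proof
      fix i assume "i \<in> {1..2*N} - {1..N}"
      then have "N < p ^ i" using pow_gt_exp[OF p, of i] by auto
      then show "N div p ^ i = 0" by simp
    qed
    then show ?thesis by (intro sum.mono_neutral_left) auto
  qed
  note sN = this
  have le: "\<And>i. 2 * (N div p ^ i) \<le> 2*N div p ^ i"
  proof -
    fix i
    have pos: "0 < p ^ i" using p prime_gt_0_nat by simp
    have "2 * (N div p ^ i) * p ^ i \<le> 2 * N" by simp
    then show "2 * (N div p ^ i) \<le> 2*N div p ^ i" using pos by (simp add: less_eq_div_iff_mult_less_eq)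
  qed
  have eq2: "?e = (\<Sum>i\<in>{1..2*N}. 2*N div p ^ i - 2 * (N div p ^ i))"
    unfolding eq sN by (simp add: sum_subtractf_nat le sum_distrib_left)
  have trm: "\<And>i. 2*N div p ^ i - 2 * (N div p ^ i) \<le> (if p ^ i \<le> 2*N then 1 else 0)"
  proof -
    fix i
    have pos: "0 < p ^ i" using p prime_gt_0_nat by simp
    have a: "2*N div p ^ i \<le> 2 * (N div p ^ i) + 1"
    proof -
      have e1: "2*N = 2 * (N div p^i * p^i) + 2 * (N mod p^i)" using div_mult_mod_eq[of N "p^i"] by linarith
      have e2: "(2 * (N div p ^ i) + 2) * p ^ i = 2 * (N div p^i * p^i) + 2 * p^i" by (simp add: algebra_simps)
      have "N mod p^i < p^i" using pos by simp
      then have "2 * N < (2 * (N div p ^ i) + 2) * p ^ i" unfolding e2 using e1 by linarith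
      then have "2*N div p^i < 2 * (N div p ^ i) + 2" using div_less_iff_less_mult[OF pos, of "2*N" "2 * (N div p ^ i) + 2"] by blast
      then show ?thesis by linarith
    qed
    show "2*N div p ^ i - 2 * (N div p ^ i) \<le> (if p ^ i \<le> 2*N then 1 else 0)"
      using a by auto
  qed
  have sub: "{i \<in> {1..2*N}. p ^ i \<le> 2*N} \<subseteq> {1..?e - 1}"
  proof
    fix i assume i: "i \<in> {i \<in> {1..2*N}. p ^ i \<le> 2*N}"
    then have "p ^ i < p ^ ?e" using big by auto
    then have "i < ?e" using p prime_gt_1_nat power_less_imp_less_exp by blast
    then show "i \<in> {1..?e - 1}" using i by auto
  qed
  have "?e \<le> (\<Sum>i\<in>{1..2*N}. (if p ^ i \<le> 2*N then 1 else 0))"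
    unfolding eq2 by (rule sum_mono) (rule trm)
  also have "\<dots> = card {i \<in> {1..2*N}. p ^ i \<le> 2*N}" by (simp only: sum_ind_card finite_atLeastAtMost)
  also have "\<dots> \<le> ?e - 1" using card_mono[OF _ sub] by simp
  finally have "?e \<le> ?e - 1" .
  moreover have "?e > 0" using big N by (cases "?e") auto
  ultimately show False by simp
qed



lemma prod_primes_dvd:
  assumes "finite S" "\<forall>p\<in>S. prime (p::nat) \<and> p dvd x"
  shows "\<Prod>S dvd x"
  using assms
proof (induction S rule: finite_induct)
  case empty then show ?case by simp
next
  case (insert p S)
  have "\<not> p dvd \<Prod>S"
  proof
    assume "p dvd \<Prod>S"
    then obtain q where "q \<in> S" "p dvd q" using insert prime_dvd_prod_iff[of S p id] by auto
    then have "p = q" using insert primes_dvd_imp_eq by auto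
    then show False using insert \<open>q \<in> S\<close> by auto
  qed
  then have "coprime p (\<Prod>S)" using insert by (intro prime_imp_coprime) auto
  then show ?case using insert by (simp add: divides_mult)
qed

lemma binom_odd_le: "(2*m+1) choose m \<le> 4 ^ m"
proof -
  have s: "((2*m+1) choose m) = (2*m+1) choose (m+1)"
    using binomial_symmetric[of m "2*m+1"] by simp
  have g: "\<And>f::nat\<Rightarrow>nat. (\<Sum>k\<in>{m,m+1}. f k) = f m + f (m+1)" by simp
  have "((2*m+1) choose m) + ((2*m+1) choose (m+1)) = (\<Sum>k\<in>{m,m+1}. (2*m+1) choose k)" by (rule g[symmetric])
  also have "\<dots> \<le> (\<Sum>k\<le>2*m+1. (2*m+1) choose k)" by (intro sum_mono2) auto
  also have "\<dots> = 2 ^ (2*m+1)" by (rule choose_row_sum)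
  also have "\<dots> = 2 * 4 ^ m" by (simp add: power_mult)
  finally show ?thesis using s by simp
qed

lemma primes_mid_dvd: assumes "prime p" "m+1 < p" "p \<le> 2*m+1"
  shows "p dvd (2*m+1) choose m"
proof -
  have fe: "fact (2*m+1) = ((2*m+1) choose m) * (fact m * (fact (m+1) :: nat))"
    using binomial_fact_lemma[of m "2*m+1"] by (simp add: algebra_simps)
  have "p dvd (fact (2*m+1) :: nat)" using assms prime_dvd_fact_iff by blast
  moreover have "\<not> p dvd (fact m :: nat)" using prime_dvd_fact_iff[OF assms(1), of m] assms(2) by linarith
  moreover have "\<not> p dvd (fact (m+1) :: nat)" using prime_dvd_fact_iff[OF assms(1), of "m+1"] assms(2) by linarith
  ultimately show ?thesis unfolding fe using assms(1) prime_dvd_mult_iff by blast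
qed

lemma finite_primes_le: "finite {p::nat. prime p \<and> p \<le> k}"
  by (rule finite_subset[of _ "{..k}"]) auto

lemma primorial_le: "\<Prod>{p. prime p \<and> p \<le> n} \<le> (4::nat) ^ n"
proof (induction n rule: less_induct)
  case (less n)
  show ?case
  proof (cases "n \<le> 2")
    case True
    have sub: "{p. prime p \<and> p \<le> n} \<subseteq> {2}"
    proof
      fix p assume "p \<in> {p. prime p \<and> p \<le> n}"
      then have "prime p" "p \<le> n" by auto
      then have "2 \<le> p" "p \<le> 2" using True prime_ge_2_nat by auto
      then show "p \<in> {2}" by simp
    qed
    show ?thesis
    proof (cases "{p. prime p \<and> p \<le> n} = {}")
      case e0: True show ?thesis by (subst e0) simp
    next
      case False
      then have e: "{p. prime p \<and> p \<le> n} = {2}" using sub by blast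
      then have "n \<noteq> 0" by auto
      then have "(4::nat) ^ 1 \<le> 4 ^ n" by (intro power_increasing) auto
      then show ?thesis unfolding e by simp
    qed
  next
    case False
    show ?thesis
    proof (cases "even n")
      case True
      then have np: "\<not> prime n" using False prime_odd_nat[of n] by auto
      have "{p. prime p \<and> p \<le> n} = {p. prime p \<and> p \<le> n - 1}"
      proof (intro Collect_cong iffI)
        fix p assume "prime p \<and> p \<le> n"
        then have "p \<noteq> n" using np by auto
        then show "prime p \<and> p \<le> n - 1" using \<open>prime p \<and> p \<le> n\<close> by auto
      qed auto
      then have "\<Prod>{p. prime p \<and> p \<le> n} \<le> 4 ^ (n-1)" using less[of "n-1"] False by simp
      also have "\<dots> \<le> 4 ^ n" by (intro power_increasing) auto
      finally show ?thesis .
    next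
      case odd: False
      then obtain m where n: "n = 2*m+1" using oddE by blast
      have m: "m \<ge> 1" using False n by simp
      have split: "{p. prime p \<and> p \<le> n} = {p. prime p \<and> p \<le> m+1} \<union> {p. prime p \<and> m+1 < p \<and> p \<le> n}"
        using n by auto
      have fin2: "finite {p. prime p \<and> m+1 < p \<and> p \<le> n}"
        by (rule finite_subset[OF _ finite_primes_le[of n]]) auto
      have disj: "{p. prime p \<and> p \<le> m+1} \<inter> {p. prime p \<and> m+1 < p \<and> p \<le> n} = {}" by auto
      have "\<Prod>{p. prime p \<and> p \<le> n} = \<Prod>{p. prime p \<and> p \<le> m+1} * \<Prod>{p. prime p \<and> m+1 < p \<and> p \<le> n}"
        unfolding split by (rule prod.union_disjoint[OF finite_primes_le fin2 disj])
      also have "\<dots> \<le> 4 ^ (m+1) * 4 ^ m"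
      proof (rule mult_le_mono)
        have "m + 1 < n" using n m by simp
        then show "\<Prod>{p. prime p \<and> p \<le> m+1} \<le> 4 ^ (m+1)" by (rule less)
        have "\<Prod>{p. prime p \<and> m+1 < p \<and> p \<le> n} dvd (2*m+1) choose m"
        proof (rule prod_primes_dvd[OF fin2], intro ballI conjI)
          fix p assume "p \<in> {p. prime p \<and> m+1 < p \<and> p \<le> n}"
          then show "prime p" "p dvd (2*m+1) choose m" using primes_mid_dvd n by auto
        qed
        then have "\<Prod>{p. prime p \<and> m+1 < p \<and> p \<le> n} \<le> (2*m+1) choose m"
          by (rule dvd_imp_le) simp
        then show "\<Prod>{p. prime p \<and> m+1 < p \<and> p \<le> n} \<le> 4 ^ m" using binom_odd_le order_trans by blast
      qed
      also have "\<dots> = 4 ^ n" using n by (simp add: power_add[symmetric])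
      finally show ?thesis .
    qed
  qed
qed



lemma ln4_ge1: "1 \<le> ln (4::real)"
proof -
  have "ln (1/2::real) \<le> 1/2 - 1" by (rule ln_le_minus_one) simp
  then have "ln (2::real) \<ge> 1/2" by (simp add: ln_div)
  moreover have "ln (4::real) = 2 * ln 2" using ln_realpow[of 2 2] by simp
  ultimately show ?thesis by simp
qed

lemma real_ineq:
  fixes y :: real assumes y: "32 \<le> y"
  shows "1 + 4*y + 4*y^3 + y^4 / 2^20 * ln 4 < y^4 / 2 * ln 4"
proof -
  have l: "1 \<le> ln (4::real)" by (rule ln4_ge1)
  have "y^4 / 2 * ln 4 - y^4 / 2^20 * ln 4 = y^4 * ln 4 * (1/2 - 1/2^20)" by (simp add: algebra_simps)
  also have "\<dots> \<ge> y^4 * 1 * (1/4)"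
    using l y by (intro mult_mono) auto
  finally have a: "y^4 / 2 * ln 4 - y^4 / 2^20 * ln 4 \<ge> y^4 / 4" by simp
  have "y^4 = y * y^3" by (simp add: power_numeral_reduce)
  then have b: "y^4 \<ge> 32 * y^3" using y by (simp add: mult_right_mono)
  have "y^3 \<ge> 32 * y^2" using y by (simp add: power_numeral_reduce mult_right_mono)
  moreover have "y^2 \<ge> 32 * y" using y by (simp add: power2_eq_square mult_right_mono)
  ultimately have c: "y^3 \<ge> 1 + 4*y" using y by linarith
  show ?thesis using a b c y by linarith
qed

lemma central_binom_lower: "(4::nat) ^ N \<le> (2*N+1) * ((2*N) choose N)"
proof -
  have "(4::nat) ^ N = 2 ^ (2*N)" by (simp add: power_mult)
  also have "\<dots> = (\<Sum>k\<le>2*N. (2*N) choose k)" by (rule choose_row_sum[symmetric])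
  also have "\<dots> \<le> (\<Sum>k\<le>2*N. (2*N) choose N)" by (intro sum_mono binomial_maximum')
  also have "\<dots> = (2*N+1) * ((2*N) choose N)" by simp
  finally show ?thesis .
qed

lemma weak_bertrand: fixes n :: nat assumes n: "1 \<le> n"
  shows "\<exists>p::nat. prime p \<and> n < p \<and> p \<le> 2^20 * n"
proof (rule ccontr)
  assume no: "\<not> ?thesis"
  define N where "N = 2^19 * n"
  define X where "X = 2 * N"
  have X: "X = 2^20 * n" unfolding X_def N_def by simp
  define C where "C = X choose N"
  have Cpos: "C > 0" unfolding C_def X_def by simp
  have Ceq: "C = (\<Prod>p\<in>prime_factors C. p ^ multiplicity p C)"
    using prime_factorization_nat[OF Cpos] .
  have pf_le: "\<And>p. p \<in> prime_factors C \<Longrightarrow> prime p \<and> p \<le> n"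
  proof -
    fix p assume p: "p \<in> prime_factors C"
    then have pp: "prime p" and pd: "p dvd C" by auto
    have fe: "fact X = C * (fact N * (fact N :: nat))"
      using binomial_fact_lemma[of N X] unfolding C_def X_def by (simp add: algebra_simps mult_2)
    have "p dvd (fact X :: nat)" unfolding fe using pd by simp
    then have "p \<le> X" using prime_dvd_fact_iff[OF pp] by simp
    then show "prime p \<and> p \<le> n" using no pp X by (meson not_le)
  qed
  define S1 where "S1 = {p\<in>prime_factors C. p * p \<le> X}"
  define S2 where "S2 = {p\<in>prime_factors C. \<not> p * p \<le> X}"
  have fin: "finite (prime_factors C)" by simp
  have un: "prime_factors C = S1 \<union> S2" and dj: "S1 \<inter> S2 = {}" unfolding S1_def S2_def by auto
  have f1: "finite S1" and f2: "finite S2" using fin unfolding S1_def S2_def by auto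
  have Csplit: "C = (\<Prod>p\<in>S1. p ^ multiplicity p C) * (\<Prod>p\<in>S2. p ^ multiplicity p C)"
    using Ceq unfolding un by (simp add: prod.union_disjoint[OF f1 f2 dj])
  have N0: "N > 0" unfolding N_def using n by simp
  have e1: "\<And>p. p \<in> prime_factors C \<Longrightarrow> p ^ multiplicity p C \<le> X"
    using central_binom_mult[OF _ N0] unfolding C_def X_def by auto
  have Xge: "1 \<le> X" unfolding X using n by simp
  define s where "s = card S1"
  have P1: "(\<Prod>p\<in>S1. p ^ multiplicity p C) \<le> X ^ s"
    unfolding s_def using e1 Xge unfolding S1_def by (intro prod_le_power) auto
  have e2: "\<And>p. p \<in> S2 \<Longrightarrow> p ^ multiplicity p C \<le> p"
  proof -
    fix p assume p: "p \<in> S2"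
    then have pp: "prime p" and big: "X < p * p" and pf: "p \<in> prime_factors C" unfolding S2_def by auto
    show "p ^ multiplicity p C \<le> p"
    proof (cases "multiplicity p C \<le> 1")
      case True
      then show ?thesis using pp prime_gt_0_nat[OF pp]
        by (cases "multiplicity p C") auto
    next
      case False
      then have "p ^ 2 \<le> p ^ multiplicity p C" using pp prime_gt_0_nat[OF pp]
        by (intro power_increasing) auto
      then show ?thesis using e1[OF pf] big by (simp add: power2_eq_square)
    qed
  qed
  have P2: "(\<Prod>p\<in>S2. p ^ multiplicity p C) \<le> 4 ^ n"
  proof -
    have "(\<Prod>p\<in>S2. p ^ multiplicity p C) \<le> \<Prod>S2" using e2 by (intro prod_mono) auto
    also have "\<Prod>S2 \<le> \<Prod>{p. prime p \<and> p \<le> n}"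
    proof (rule dvd_imp_le)
      show "\<Prod>S2 dvd \<Prod>{p. prime p \<and> p \<le> n}"
        using pf_le unfolding S2_def by (intro prod_dvd_prod_subset finite_primes_le) auto
      show "0 < \<Prod>{p::nat. prime p \<and> p \<le> n}" using prime_gt_0_nat by (simp add: prod_pos)
    qed
    also have "\<dots> \<le> 4 ^ n" by (rule primorial_le)
    finally show ?thesis .
  qed
  have s_le: "real s \<le> sqrt (real X)"
  proof -
    define k where "k = nat \<lfloor>sqrt (real X)\<rfloor>"
    have sub: "S1 \<subseteq> {1..k}"
    proof
      fix p assume p: "p \<in> S1"
      then have pX: "p * p \<le> X" and pp: "prime p" unfolding S1_def by auto
      have p1: "1 \<le> p" using prime_ge_1_nat[OF pp] .
      have "real p * real p \<le> real X" using pX by (metis of_nat_le_iff of_nat_mult)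
      then have "real p \<le> sqrt (real X)" by (intro real_le_rsqrt) (simp add: power2_eq_square)
      then have "p \<le> k" unfolding k_def by (rule le_nat_floor)
      then show "p \<in> {1..k}" using p1 by simp
    qed
    have "s \<le> k" unfolding s_def using card_mono[OF finite_atLeastAtMost sub] by simp
    moreover have "real k \<le> sqrt (real X)"
    proof -
      have "0 \<le> \<lfloor>sqrt (real X)\<rfloor>" by simp
      then have "real k = real_of_int \<lfloor>sqrt (real X)\<rfloor>" unfolding k_def by simp
      also have "\<dots> \<le> sqrt (real X)" by (rule of_int_floor_le)
      finally show ?thesis .
    qed
    ultimately show ?thesis by linarith
  qed
  have main: "(4::nat) ^ N \<le> (X+1) * (X ^ s * 4 ^ n)"
  proof -
    have a: "(4::nat) ^ N \<le> (X+1) * C" using central_binom_lower[of N] unfolding C_def X_def .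
    have "C \<le> X ^ s * 4 ^ n" by (subst Csplit, rule mult_le_mono[OF P1 P2])
    then have "(X+1) * C \<le> (X+1) * (X ^ s * 4 ^ n)" by (rule mult_le_mono2)
    with a show ?thesis by (rule order_trans)
  qed
  then have "real ((4::nat) ^ N) \<le> real ((X+1) * (X ^ s * 4 ^ n))" by (rule of_nat_mono)
  then have mainr: "(4::real) ^ N \<le> (real X + 1) * (real X ^ s * 4 ^ n)"
    by (simp only: of_nat_mult of_nat_power of_nat_add of_nat_1 of_nat_numeral)
  have Xpos: "0 < real X" using Xge by simp
  have lnm: "real N * ln 4 \<le> ln (real X + 1) + real s * ln (real X) + real n * ln 4"
  proof -
    have "ln ((4::real) ^ N) \<le> ln ((real X + 1) * (real X ^ s * 4 ^ n))"
      using mainr Xpos by (subst ln_le_cancel_iff) auto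
    then show ?thesis using Xpos by (simp add: ln_mult ln_realpow)
  qed
  define y where "y = sqrt (sqrt (real X))"
  have y2: "y ^ 2 = sqrt (real X)" unfolding y_def using Xpos by simp
  have y4: "y ^ 4 = real X"
  proof -
    have "y ^ 4 = (y^2)^2" by simp
    also have "\<dots> = real X" unfolding y2 using Xpos by simp
    finally show ?thesis .
  qed
  have ypos: "0 < y" unfolding y_def using Xpos by simp
  have y32: "32 \<le> y"
  proof -
    have "(32::real) ^ 4 \<le> y ^ 4" using y4 X n by simp
    then show ?thesis using ypos power_mono_iff[of 32 y 4] by simp
  qed
  have lnX: "ln (real X) \<le> 4 * y"
  proof -
    have "ln (real X) = 4 * ln y" using y4 ln_realpow[of y 4] by simp
    also have "\<dots> \<le> 4 * (y - 1)" using ln_le_minus_one[OF ypos] by simp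
    finally show ?thesis by simp
  qed
  have lnX0: "0 \<le> ln (real X)" using Xge by simp
  have lnX1: "ln (real X + 1) \<le> 1 + 4 * y"
  proof -
    have "ln (real X + 1) \<le> ln (2 * real X)" using Xge Xpos by (subst ln_le_cancel_iff) auto
    also have "\<dots> = ln 2 + ln (real X)" using Xpos by (simp add: ln_mult)
    also have "ln (2::real) \<le> 1" using ln_le_minus_one[of 2] by simp
    finally show ?thesis using lnX by simp
  qed
  have sl: "real s * ln (real X) \<le> y^2 * (4 * y)"
    using s_le y2 lnX lnX0 by (intro mult_mono) auto
  have Nr: "real N = y^4 / 2" and nr: "real n = y^4 / 2^20" using y4 unfolding X_def N_def by simp_all
  have "y^4 / 2 * ln 4 \<le> 1 + 4 * y + 4 * y^3 + y^4 / 2^20 * ln 4"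
    using lnm lnX1 sl unfolding Nr nr by (simp add: power_numeral_reduce algebra_simps)
  then show False using real_ineq[OF y32] by simp
qed



lemma all_dvd_smult:
  fixes Q :: "int poly"
  assumes "\<forall>i. p dvd coeff Q i"
  shows "Q = smult p (map_poly (\<lambda>c. c div p) Q)"
proof (rule poly_eqI)
  fix i show "coeff Q i = coeff (smult p (map_poly (\<lambda>c. c div p) Q)) i"
    using assms by (simp add: coeff_map_poly)
qed

lemma poly_roots_mod:
  fixes P :: "int poly" and p :: nat
  assumes p: "prime p" and nz: "\<exists>i. \<not> int p dvd coeff P i"
  shows "card {a \<in> {0..<p}. int p dvd poly P (int a)} \<le> degree P"
  using nz
proof (induction "degree P" arbitrary: P rule: less_induct)
  case less
  have pi: "prime (int p)" using p by simp
  let ?R = "{a \<in> {0..<p}. int p dvd poly P (int a)}"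
  show ?case
  proof (cases "?R = {}")
    case e0: True show ?thesis by (subst e0) simp
  next
    case False
    then obtain a0 where a0: "a0 < p" "int p dvd poly P (int a0)" by auto
    define Q where "Q = synthetic_div P (int a0)"
    have eq: "P = [:- int a0, 1:] * Q + [:poly P (int a0):]"
      unfolding Q_def by (rule synthetic_div_correct'[symmetric])
    have dP: "degree P \<noteq> 0"
    proof
      assume d0: "degree P = 0"
      then have "\<And>i. i \<noteq> 0 \<Longrightarrow> coeff P i = 0" by (intro coeff_eq_0) simp
      moreover have "poly P (int a0) = coeff P 0" by (subst degree_0_id[OF d0, symmetric]) simp
      ultimately show False using less.prems a0 by (metis dvd_0_right)
    qed
    have dQ: "degree Q < degree P" unfolding Q_def using dP by (simp add: degree_synthetic_div)
    have nzQ: "\<exists>i. \<not> int p dvd coeff Q i"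
    proof (rule ccontr)
      assume "\<not> ?thesis"
      then have "\<forall>i. int p dvd coeff Q i" by simp
      then have Qs: "Q = smult (int p) (map_poly (\<lambda>c. c div int p) Q)" by (rule all_dvd_smult)
      have "\<forall>i. int p dvd coeff P i"
      proof
        fix i
        have "P = smult (int p) ([:- int a0, 1:] * map_poly (\<lambda>c. c div int p) Q) + [:poly P (int a0):]"
          using eq Qs by (metis mult_smult_right)
        then have "coeff P i = int p * coeff ([:- int a0, 1:] * map_poly (\<lambda>c. c div int p) Q) i + coeff [:poly P (int a0):] i"
          by (metis coeff_add coeff_smult)
        moreover have "int p dvd coeff [:poly P (int a0):] i" using a0 by (cases i) auto
        ultimately show "int p dvd coeff P i" by simp
      qed
      then show False using less.prems by blast
    qed
    have sub: "?R \<subseteq> insert a0 {a \<in> {0..<p}. int p dvd poly Q (int a)}"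
    proof
      fix a assume a: "a \<in> ?R"
      have "poly P (int a) = (int a - int a0) * poly Q (int a) + poly P (int a0)"
        by (subst eq) (simp add: algebra_simps)
      then have "int p dvd (int a - int a0) * poly Q (int a)" using a a0
        by (metis (no_types, lifting) dvd_diff mem_Collect_eq add_diff_cancel_right')
      then have "int p dvd (int a - int a0) \<or> int p dvd poly Q (int a)" using pi prime_dvd_mult_iff by blast
      moreover have "int p dvd (int a - int a0) \<Longrightarrow> a = a0"
      proof (rule ccontr)
        assume d: "int p dvd (int a - int a0)" "a \<noteq> a0"
        then have "\<bar>int p\<bar> \<le> \<bar>int a - int a0\<bar>" by (intro dvd_imp_le_int) auto
        then show False using a a0 by auto
      qed
      ultimately show "a \<in> insert a0 {a \<in> {0..<p}. int p dvd poly Q (int a)}" using a by auto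
    qed
    have "card ?R \<le> card (insert a0 {a \<in> {0..<p}. int p dvd poly Q (int a)})"
      by (rule card_mono[OF _ sub]) auto
    also have "\<dots> \<le> Suc (card {a \<in> {0..<p}. int p dvd poly Q (int a)})" by (rule card_insert_le_m1) auto
    also have "card {a \<in> {0..<p}. int p dvd poly Q (int a)} \<le> degree Q"
      using less.hyps[OF dQ nzQ] .
    finally show ?thesis using dQ by simp
  qed
qed



definition digit :: "nat \<Rightarrow> nat \<Rightarrow> nat \<Rightarrow> nat" where
  "digit q x i = x div q ^ i mod q"

definition cpoly :: "nat \<Rightarrow> nat \<Rightarrow> nat \<Rightarrow> int poly" where
  "cpoly q d x = (\<Sum>i\<le>d. monom (int (digit q x i)) i)"

definition cval :: "nat \<Rightarrow> nat \<Rightarrow> nat \<Rightarrow> nat \<Rightarrow> nat" where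
  "cval q d x a = (\<Sum>i\<le>d. digit q x i * a ^ i) mod q"

lemma cval_less: "0 < q \<Longrightarrow> cval q d x a < q"
  unfolding cval_def by simp

lemma poly_cpoly: "poly (cpoly q d x) (int a) = int (\<Sum>i\<le>d. digit q x i * a ^ i)"
  unfolding cpoly_def by (simp add: poly_sum poly_monom)

lemma coeff_cpoly: "coeff (cpoly q d x) j = (if j \<le> d then int (digit q x j) else 0)"
  unfolding cpoly_def by (simp add: coeff_sum coeff_monom)

lemma cval_eq_iff: "cval q d x a = cval q d y a \<longleftrightarrow> int q dvd poly (cpoly q d x - cpoly q d y) (int a)"
proof -
  let ?A = "\<Sum>i\<le>d. digit q x i * a ^ i" and ?B = "\<Sum>i\<le>d. digit q y i * a ^ i"
  have "cval q d x a = cval q d y a \<longleftrightarrow> ?A mod q = ?B mod q" unfolding cval_def ..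
  also have "\<dots> \<longleftrightarrow> int ?A mod int q = int ?B mod int q"
    by (simp only: of_nat_mod[symmetric] of_nat_eq_iff)
  also have "\<dots> \<longleftrightarrow> int q dvd int ?A - int ?B" by (rule mod_eq_dvd_iff)
  also have "int ?A - int ?B = poly (cpoly q d x - cpoly q d y) (int a)"
    by (simp add: poly_cpoly)
  finally show ?thesis .
qed

lemma digit_Suc: "digit q x (Suc i) = digit q (x div q) i"
  unfolding digit_def by (simp add: div_mult2_eq)

lemma digits_eq:
  assumes "0 < q" "x < q ^ Suc d" "y < q ^ Suc d" "\<forall>i\<le>d. digit q x i = digit q y i"
  shows "x = y"
  using assms(2-4)
proof (induction d arbitrary: x y)
  case 0
  then show ?case using assms(1) by (simp add: digit_def)
next
  case (Suc d)
  have "x div q < q ^ Suc d" using Suc.prems(1) assms(1)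
    by (simp add: div_less_iff_less_mult mult.commute)
  moreover have "y div q < q ^ Suc d" using Suc.prems(2) assms(1)
    by (simp add: div_less_iff_less_mult mult.commute)
  moreover have "\<forall>i\<le>d. digit q (x div q) i = digit q (y div q) i"
    using Suc.prems(3) by (metis Suc_le_mono digit_Suc)
  ultimately have "x div q = y div q" using Suc.IH by blast
  moreover have "x mod q = y mod q" using Suc.prems(3)[rule_format, of 0] by (simp add: digit_def)
  ultimately show ?case by (metis div_mult_mod_eq)
qed

lemma code_agree:
  assumes q: "prime q" and xy: "x \<noteq> y" "x < q ^ Suc d" "y < q ^ Suc d"
  shows "card {a \<in> {0..<q}. cval q d x a = cval q d y a} \<le> d"
proof -
  have q0: "0 < q" using q prime_gt_0_nat by blast
  obtain i where i: "i \<le> d" "digit q x i \<noteq> digit q y i"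
    using digits_eq[OF q0 xy(2,3)] xy(1) by blast
  let ?D = "cpoly q d x - cpoly q d y"
  have cD: "coeff ?D i = int (digit q x i) - int (digit q y i)"
    using i by (simp add: coeff_cpoly)
  have ndvd: "\<not> int q dvd coeff ?D i"
  proof
    assume "int q dvd coeff ?D i"
    moreover have "coeff ?D i \<noteq> 0" using cD i by simp
    ultimately have "\<bar>int q\<bar> \<le> \<bar>coeff ?D i\<bar>" by (rule dvd_imp_le_int[rotated])
    moreover have "digit q x i < q" "digit q y i < q" using q0 by (simp_all add: digit_def)
    ultimately show False using cD by linarith
  qed
  have degD: "degree ?D \<le> d"
    by (rule degree_le) (simp add: coeff_cpoly)
  have "{a \<in> {0..<q}. cval q d x a = cval q d y a} = {a \<in> {0..<q}. int q dvd poly ?D (int a)}"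
    by (simp add: cval_eq_iff)
  also have "card \<dots> \<le> degree ?D" using poly_roots_mod[OF q] ndvd by blast
  finally show ?thesis using degD by simp
qed



definition Phi :: "nat \<Rightarrow> (nat \<Rightarrow> real) \<Rightarrow> (nat \<Rightarrow> nat) \<Rightarrow> nat \<Rightarrow> nat \<Rightarrow> nat \<Rightarrow> nat \<Rightarrow> real" where
  "Phi n rw cf x q d a = (\<Sum>u\<in>{1..n}. if cf u \<noteq> x \<and> cval q d (cf u) a = cval q d x a then rw u else 0)"

definition pick :: "nat \<Rightarrow> (nat \<Rightarrow> real) \<Rightarrow> (nat \<Rightarrow> nat) \<Rightarrow> nat \<Rightarrow> nat \<Rightarrow> nat \<Rightarrow> nat" where
  "pick n rw cf x q d = (SOME a. a < q \<and> real q * Phi n rw cf x q d a \<le> real d * (\<Sum>u\<in>{1..n}. rw u))"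

definition stepc :: "nat \<Rightarrow> (nat \<Rightarrow> real) \<Rightarrow> (nat \<Rightarrow> nat) \<Rightarrow> nat \<Rightarrow> nat \<Rightarrow> nat \<Rightarrow> nat" where
  "stepc n rw cf x q d = pick n rw cf x q d * q + cval q d x (pick n rw cf x q d)"

lemma stepc_cong:
  assumes "\<forall>u\<in>{1..n}. rw u = rw' u" "\<forall>u\<in>{1..n}. rw u \<noteq> 0 \<longrightarrow> cf u = cf' u"
  shows "stepc n rw cf x q d = stepc n rw' cf' x q d"
proof -
  have "\<And>a. Phi n rw cf x q d a = Phi n rw' cf' x q d a"
    unfolding Phi_def using assms by (intro sum.cong) auto
  moreover have "(\<Sum>u\<in>{1..n}. rw u) = (\<Sum>u\<in>{1..n}. rw' u)" using assms by (intro sum.cong) auto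
  ultimately show ?thesis unfolding stepc_def pick_def by simp
qed

lemma pick_exists:
  assumes q: "prime q" and col: "\<forall>u\<in>{1..n}. cf u < q ^ Suc d" "x < q ^ Suc d"
    and nn: "\<forall>u. 0 \<le> rw u"
  shows "\<exists>a. a < q \<and> real q * Phi n rw cf x q d a \<le> real d * (\<Sum>u\<in>{1..n}. rw u)"
proof (rule ccontr)
  assume no: "\<not> ?thesis"
  have q0: "0 < q" using q prime_gt_0_nat by blast
  let ?W = "\<Sum>u\<in>{1..n}. rw u"
  have "(\<Sum>a<q. Phi n rw cf x q d a) = (\<Sum>u\<in>{1..n}. \<Sum>a<q. if cf u \<noteq> x \<and> cval q d (cf u) a = cval q d x a then rw u else 0)"
    unfolding Phi_def by (rule sum.swap)
  also have "\<dots> \<le> (\<Sum>u\<in>{1..n}. real d * rw u)"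
  proof (rule sum_mono)
    fix u assume u: "u \<in> {1..n}"
    show "(\<Sum>a<q. if cf u \<noteq> x \<and> cval q d (cf u) a = cval q d x a then rw u else 0) \<le> real d * rw u"
    proof (cases "cf u = x")
      case True then show ?thesis using nn by simp
    next
      case False
      have "(\<Sum>a<q. if cf u \<noteq> x \<and> cval q d (cf u) a = cval q d x a then rw u else 0)
          = (\<Sum>a\<in>{a \<in> {0..<q}. cval q d (cf u) a = cval q d x a}. rw u)"
        using False by (simp add: sum.If_cases lessThan_atLeast0 Int_def)
      also have "\<dots> = real (card {a \<in> {0..<q}. cval q d (cf u) a = cval q d x a}) * rw u" by simp
      also have "\<dots> \<le> real d * rw u"
        using code_agree[OF q False col(1)[rule_format, OF u] col(2)] nn by (intro mult_right_mono) auto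
      finally show ?thesis .
    qed
  qed
  also have "\<dots> = real d * ?W" by (simp add: sum_distrib_left)
  finally have le: "(\<Sum>a<q. Phi n rw cf x q d a) \<le> real d * ?W" .
  have "(\<Sum>a<q. real d * ?W) < (\<Sum>a<q. real q * Phi n rw cf x q d a)"
    using no q0 by (intro sum_strict_mono) (auto simp: not_le)
  then have "real q * (real d * ?W) < real q * (\<Sum>a<q. Phi n rw cf x q d a)"
    by (simp add: sum_distrib_left)
  then have "real d * ?W < (\<Sum>a<q. Phi n rw cf x q d a)" using q0 by simp
  then show False using le by simp
qed

lemma pick_prop:
  assumes "prime q" "\<forall>u\<in>{1..n}. cf u < q ^ Suc d" "x < q ^ Suc d" "\<forall>u. 0 \<le> rw u"
  shows "pick n rw cf x q d < q \<and> real q * Phi n rw cf x q d (pick n rw cf x q d) \<le> real d * (\<Sum>u\<in>{1..n}. rw u)"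
  unfolding pick_def using someI_ex[OF pick_exists[OF assms]] .

lemma stepc_less:
  assumes "prime q" "\<forall>u\<in>{1..n}. cf u < q ^ Suc d" "x < q ^ Suc d" "\<forall>u. 0 \<le> rw u"
  shows "stepc n rw cf x q d < q * q"
proof -
  have q0: "0 < q" using assms(1) prime_gt_0_nat by blast
  have "pick n rw cf x q d < q" using pick_prop[OF assms] by blast
  then have "Suc (pick n rw cf x q d) * q \<le> q * q" by (intro mult_le_mono1) simp
  then have "pick n rw cf x q d * q + q \<le> q * q" by simp
  moreover have "cval q d x (pick n rw cf x q d) < q" using cval_less[OF q0] .
  ultimately show ?thesis unfolding stepc_def by linarith
qed

lemma weighted_graph_nonneg: "weighted_graph n w \<Longrightarrow> 0 \<le> w u v"
  unfolding weighted_graph_def by blast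

lemma defect_step:
  assumes wg: "weighted_graph n w" and q: "prime q"
    and col: "\<forall>u\<in>{1..n}. col u < q ^ Suc d" and v: "v \<in> {1..n}"
  defines "newc \<equiv> (\<lambda>u. stepc n (w u) col (col u) q d)"
  shows "wdefect n w newc v \<le> wdefect n w col v + real d / real q * wdeg n w v"
proof -
  have q0: "0 < q" using q prime_gt_0_nat by blast
  have nn: "\<forall>u. 0 \<le> w v u" using wg weighted_graph_nonneg by blast
  let ?a = "pick n (w v) col (col v) q d"
  have pp: "real q * Phi n (w v) col (col v) q d ?a \<le> real d * (\<Sum>u\<in>{1..n}. w v u)"
    using pick_prop[OF q col col[rule_format, OF v] nn] by blast
  have pointwise: "\<And>u. u \<in> {1..n} \<Longrightarrow> (if newc u = newc v then w v u else 0)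
     \<le> (if col u = col v then w v u else 0) + (if col u \<noteq> col v \<and> cval q d (col u) ?a = cval q d (col v) ?a then w v u else 0)"
  proof -
    fix u assume u: "u \<in> {1..n}"
    let ?b = "pick n (w u) col (col u) q d"
    show "?thesis u"
    proof (cases "newc u = newc v")
      case True
      have cu: "cval q d (col u) ?b < q" and cv: "cval q d (col v) ?a < q" using cval_less[OF q0] by auto
      have e: "?b * q + cval q d (col u) ?b = ?a * q + cval q d (col v) ?a"
        using True unfolding newc_def stepc_def .
      have "?b = ?a"
      proof -
        have "(?b * q + cval q d (col u) ?b) div q = ?b" using cu q0 by simp
        moreover have "(?a * q + cval q d (col v) ?a) div q = ?a" using cv q0 by simp
        ultimately show ?thesis using e by simp
      qed
      then have "cval q d (col u) ?a = cval q d (col v) ?a" using e by simp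
      then show ?thesis using True nn by auto
    next
      case False then show ?thesis using nn by auto
    qed
  qed
  have "wdefect n w newc v = (\<Sum>u\<in>{1..n}. if newc u = newc v then w v u else 0)"
    unfolding wdefect_def by (simp add: sum.If_cases Int_def)
  also have "\<dots> \<le> (\<Sum>u\<in>{1..n}. (if col u = col v then w v u else 0) + (if col u \<noteq> col v \<and> cval q d (col u) ?a = cval q d (col v) ?a then w v u else 0))"
    by (rule sum_mono) (rule pointwise)
  also have "\<dots> = wdefect n w col v + Phi n (w v) col (col v) q d ?a"
    unfolding wdefect_def Phi_def by (simp add: sum.distrib sum.If_cases Int_def)
  also have "Phi n (w v) col (col v) q d ?a \<le> real d / real q * wdeg n w v"
    using pp q0 unfolding wdeg_def by (simp add: field_simps)
  finally show ?thesis by simp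
qed



definition clog :: "nat \<Rightarrow> nat" where "clog k = (LEAST j. k \<le> 2 ^ j)"

lemma clog_ge: "k \<le> 2 ^ clog k"
  unfolding clog_def by (rule LeastI_ex) (use less_exp less_imp_le in blast)

lemma clog_le: "k \<le> 2 ^ j \<Longrightarrow> clog k \<le> j"
  unfolding clog_def by (rule Least_le)

lemma clog_mono: "a \<le> b \<Longrightarrow> clog a \<le> clog b"
  using clog_ge[of b] by (intro clog_le) simp

lemma clog_lt: "1 \<le> clog k \<Longrightarrow> 2 ^ (clog k - 1) < k"
proof -
  assume "1 \<le> clog k"
  then have "clog k - 1 < clog k" by simp
  then have "\<not> k \<le> 2 ^ (clog k - 1)" unfolding clog_def by (rule not_less_Least)
  then show ?thesis by simp
qed

lemma clog_pos: "2 \<le> k \<Longrightarrow> 1 \<le> clog k"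
proof (rule ccontr)
  assume "2 \<le> k" "\<not> 1 \<le> clog k"
  then have "clog k = 0" by simp
  then show False using clog_ge[of k] \<open>2 \<le> k\<close> by simp
qed

lemma clog_times8: "clog (8 * y) \<le> 3 + clog y"
  by (rule clog_le) (use clog_ge[of y] in \<open>simp add: power_add\<close>)

lemma ineqA: "10 \<le> k \<Longrightarrow> 176 + 16 * k \<le> (2::nat) ^ (k - 1)"
proof (induction k rule: dec_induct)
  case base then show ?case by simp
next
  case (step k)
  then have "(2::nat) ^ (Suc k - 1) = 2 * 2 ^ (k - 1)" by (cases k) auto
  then show ?case using step by simp
qed

lemma ineqB: "8 \<le> k \<Longrightarrow> 63 + 6 * k \<le> (2::nat) ^ (k - 1)"
proof (induction k rule: dec_induct)
  case base then show ?case by simp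
next
  case (step k)
  then have "(2::nat) ^ (Suc k - 1) = 2 * 2 ^ (k - 1)" by (cases k) auto
  then show ?case using step by simp
qed

lemma clog_big: assumes "2 ^ m \<le> b" shows "m + 1 \<le> clog b \<or> b = 2 ^ m"
proof (rule ccontr)
  assume "\<not> ?thesis"
  then have c: "clog b \<le> m" "b \<noteq> 2 ^ m" by auto
  have "b \<le> 2 ^ clog b" by (rule clog_ge)
  also have "\<dots> \<le> 2 ^ m" using c by (intro power_increasing) auto
  finally show False using assms c by simp
qed

lemma half_aux: assumes "1024 \<le> b" shows "176 + 16 * clog b \<le> b"
proof -
  have "(2::nat) ^ 10 \<le> b" using assms by simp
  from clog_big[OF this] show ?thesis
  proof
    assume k: "10 + 1 \<le> clog b"
    have "176 + 16 * clog b \<le> 2 ^ (clog b - 1)" using k by (intro ineqA) simp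
    also have "\<dots> < b" using k by (intro clog_lt) simp
    finally show ?thesis by simp
  next
    assume "b = 2 ^ 10"
    moreover have "clog (2^10) \<le> 10" by (rule clog_le) simp
    ultimately show ?thesis by simp
  qed
qed

lemma y256: assumes "256 \<le> y" shows "63 + 6 * clog y \<le> y"
proof -
  have "(2::nat) ^ 8 \<le> y" using assms by simp
  from clog_big[OF this] show ?thesis
  proof
    assume k: "8 + 1 \<le> clog y"
    have "63 + 6 * clog y \<le> 2 ^ (clog y - 1)" using k by (intro ineqB) simp
    also have "\<dots> < y" using k by (intro clog_lt) simp
    finally show ?thesis by simp
  next
    assume "y = 2 ^ 8"
    moreover have "clog (2^8) \<le> 8" by (rule clog_le) simp
    ultimately show ?thesis by simp
  qed
qed

definition gfun :: "nat \<Rightarrow> nat" where "gfun b = 44 + 6 * clog b"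

lemma gfun_mono: "a \<le> b \<Longrightarrow> gfun a \<le> gfun b"
  unfolding gfun_def using clog_mono by simp

lemma gfun_le: "1024 \<le> b \<Longrightarrow> gfun b \<le> b"
  unfolding gfun_def using half_aux by fastforce

lemma gg: "real (gfun (gfun b)) \<le> max 1024 (log 2 (real b))"
proof (cases "256 \<le> clog b")
  case True
  let ?y = "clog b"
  have "gfun b \<le> 8 * ?y" unfolding gfun_def using True by simp
  then have "clog (gfun b) \<le> 3 + clog ?y" using clog_mono clog_times8 order_trans by blast
  then have "gfun (gfun b) \<le> 62 + 6 * clog ?y" unfolding gfun_def[of "gfun b"] by simp
  also have "\<dots> \<le> ?y - 1" using y256[OF True] True by simp
  finally have a: "real (gfun (gfun b)) \<le> real ?y - 1" using True by linarith
  have "2 ^ (?y - 1) < b" using True by (intro clog_lt) simp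
  then have "real (2 ^ (?y - 1)) < real b" by linarith
  then have "(2::real) ^ (?y - 1) < real b" by simp
  then have "log 2 ((2::real) ^ (?y - 1)) < log 2 (real b)"
    by (intro log_less) auto
  then have "real (?y - 1) < log 2 (real b)" by (simp add: log_nat_power)
  then show ?thesis using a True by simp
next
  case False
  then have "gfun b \<le> 44 + 6 * 255" unfolding gfun_def by simp
  also have "\<dots> \<le> 2 ^ 11" by simp
  finally have "clog (gfun b) \<le> 11" by (rule clog_le)
  then have "gfun (gfun b) \<le> 110" unfolding gfun_def[of "gfun b"] by simp
  then show ?thesis by simp
qed



definition Lp :: "real \<Rightarrow> nat" where "Lp \<epsilon> = nat \<lceil>1/\<epsilon>\<rceil>"

lemma Lp_props: assumes "0 < \<epsilon>" "\<epsilon> < 1"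
  shows "2 \<le> Lp \<epsilon>" "1/\<epsilon> \<le> real (Lp \<epsilon>)" "real (Lp \<epsilon>) < 2/\<epsilon>"
proof -
  have g1: "1 < 1/\<epsilon>" using assms by simp
  have c: "real (Lp \<epsilon>) = real_of_int \<lceil>1/\<epsilon>\<rceil>" unfolding Lp_def using g1 by simp
  show "1/\<epsilon> \<le> real (Lp \<epsilon>)" unfolding c by simp
  have "real_of_int \<lceil>1/\<epsilon>\<rceil> < 1/\<epsilon> + 1" by linarith
  then show "real (Lp \<epsilon>) < 2/\<epsilon>" unfolding c using g1 by simp
  have "1 < \<lceil>1/\<epsilon>\<rceil>" using g1 by linarith
  then show "2 \<le> Lp \<epsilon>" unfolding Lp_def by linarith
qed

definition Bp :: "real \<Rightarrow> nat" where "Bp \<epsilon> = 1024 * (clog (Lp \<epsilon>) + 1)"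
definition rb :: "real \<Rightarrow> nat \<Rightarrow> nat" where "rb \<epsilon> b = 44 + 4 * clog b + 2 * clog (Lp \<epsilon>)"

lemma Bp_ge: "1024 \<le> Bp \<epsilon>" unfolding Bp_def by simp

lemma rb_half: assumes "Bp \<epsilon> < b" shows "2 * rb \<epsilon> b \<le> b"
proof -
  have "1024 \<le> b" using assms Bp_ge[of \<epsilon>] by linarith
  then have "176 + 16 * clog b \<le> b" by (rule half_aux)
  moreover have "8 * clog (Lp \<epsilon>) \<le> b"
  proof -
    have "1024 * (clog (Lp \<epsilon>) + 1) = 1024 * clog (Lp \<epsilon>) + 1024" by simp
    then show ?thesis using assms unfolding Bp_def by linarith
  qed
  moreover have "2 * rb \<epsilon> b = 88 + 8 * clog b + 4 * clog (Lp \<epsilon>)" unfolding rb_def by simp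
  ultimately show ?thesis by linarith
qed

lemma rb_le: "rb \<epsilon> b \<le> max (gfun b) (Bp \<epsilon>)"
proof (cases "Lp \<epsilon> \<le> b")
  case True
  then have "clog (Lp \<epsilon>) \<le> clog b" by (rule clog_mono)
  then show ?thesis unfolding rb_def gfun_def by simp
next
  case False
  then have "clog b \<le> clog (Lp \<epsilon>)" by (intro clog_mono) simp
  then show ?thesis unfolding rb_def Bp_def by simp
qed

lemma gfun_B: "gfun (Bp \<epsilon>) \<le> Bp \<epsilon>" using gfun_le[OF Bp_ge] .

definition bs :: "nat \<Rightarrow> real \<Rightarrow> nat \<Rightarrow> nat" where "bs n \<epsilon> j = (rb \<epsilon> ^^ j) (clog (n+1))"

lemma bs_0: "bs n \<epsilon> 0 = clog (n+1)" unfolding bs_def by simp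
lemma bs_Suc: "bs n \<epsilon> (Suc j) = rb \<epsilon> (bs n \<epsilon> j)" unfolding bs_def by simp

definition Hs :: "nat \<Rightarrow> nat \<Rightarrow> real" where "Hs n i = ((\<lambda>x. log 2 x) ^^ i) (real n)"

lemma Hs_Suc: "Hs n (Suc i) = log 2 (Hs n i)" unfolding Hs_def by simp

lemma rbrb: "rb \<epsilon> (rb \<epsilon> b) \<le> max (gfun (gfun b)) (Bp \<epsilon>)"
proof -
  have "rb \<epsilon> (rb \<epsilon> b) \<le> max (gfun (rb \<epsilon> b)) (Bp \<epsilon>)" by (rule rb_le)
  moreover have "gfun (rb \<epsilon> b) \<le> max (gfun (gfun b)) (gfun (Bp \<epsilon>))"
    using rb_le[of \<epsilon> b] gfun_mono by (metis max.absorb_iff1 max_def)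
  ultimately show ?thesis using gfun_B[of \<epsilon>] by linarith
qed

lemma bs_bound: "real (bs n \<epsilon> (2*i)) \<le> max (real (Bp \<epsilon>)) (Hs n i)"
proof (induction i)
  case 0
  have "clog (n+1) \<le> max (Bp \<epsilon>) n"
  proof (cases "n = 0")
    case True
    then have "clog (n+1) \<le> 0" by (intro clog_le) simp
    then show ?thesis by simp
  next
    case False
    then have "n + 1 \<le> 2 ^ n" using less_exp[of n] by (cases n) auto
    then have "clog (n+1) \<le> n" by (rule clog_le)
    then show ?thesis by simp
  qed
  then have "real (clog (n+1)) \<le> max (real (Bp \<epsilon>)) (real n)" by (auto simp: max_def split: if_splits)
  then show ?case by (simp add: bs_0 Hs_def)
next
  case (Suc i)
  let ?b = "bs n \<epsilon> (2*i)"
  have eq: "bs n \<epsilon> (2 * Suc i) = rb \<epsilon> (rb \<epsilon> ?b)"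
    by (simp add: bs_Suc[symmetric])
  have r: "rb \<epsilon> (rb \<epsilon> ?b) \<le> max (gfun (gfun ?b)) (Bp \<epsilon>)" by (rule rbrb)
  show ?case
  proof (cases "?b \<le> Bp \<epsilon>")
    case True
    then have "gfun (gfun ?b) \<le> gfun (gfun (Bp \<epsilon>))" by (intro gfun_mono)
    also have "\<dots> \<le> gfun (Bp \<epsilon>)" by (intro gfun_mono gfun_B)
    also have "\<dots> \<le> Bp \<epsilon>" by (rule gfun_B)
    finally have "rb \<epsilon> (rb \<epsilon> ?b) \<le> Bp \<epsilon>" using r by simp
    then show ?thesis unfolding eq by simp
  next
    case False
    then have bH: "real ?b \<le> Hs n i" using Suc.IH by linarith
    have bpos: "0 < real ?b" using False by simp
    have "real (gfun (gfun ?b)) \<le> max 1024 (log 2 (real ?b))" by (rule gg)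
    also have "log 2 (real ?b) \<le> log 2 (Hs n i)" using bH bpos by simp
    finally have "real (gfun (gfun ?b)) \<le> max 1024 (Hs n (Suc i))" unfolding Hs_Suc by simp
    then have "real (rb \<epsilon> (rb \<epsilon> ?b)) \<le> max (real (Bp \<epsilon>)) (Hs n (Suc i))"
      using r Bp_ge[of \<epsilon>] by (simp add: max_def split: if_splits)
    then show ?thesis unfolding eq .
  qed
qed

lemma Hs_exists: "\<exists>i. Hs n i \<le> 1"
proof -
  have claim: "(\<exists>j\<le>i. Hs n j \<le> 1) \<or> (0 < Hs n i \<and> Hs n i \<le> real n - real i)" for i
  proof (induction i)
    case 0 then show ?case unfolding Hs_def by (cases "n = 0") auto
  next
    case (Suc i)
    show ?case
    proof (cases "\<exists>j\<le>i. Hs n j \<le> 1")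
      case True then show ?thesis by (meson le_SucI)
    next
      case False
      then have h1: "1 < Hs n i" by (meson le_refl not_le)
      have h2: "Hs n i \<le> real n - real i" using Suc.IH False by blast
      then have iln: "i < n" using h1 by linarith
      define m where "m = n - i"
      have mr: "real m = real n - real i" unfolding m_def using iln by simp
      have m1: "1 \<le> m" using iln unfolding m_def by simp
      have "log 2 (Hs n i) \<le> log 2 (real m)" using h1 h2 mr by simp
      also have "\<dots> \<le> real (clog m)"
      proof -
        have "real m \<le> 2 ^ clog m" using clog_ge[of m] by (metis of_nat_le_iff of_nat_numeral of_nat_power)
        then have "log 2 (real m) \<le> log 2 (2 ^ clog m)" using m1 by (subst log_le_cancel_iff) auto
        also have "log 2 ((2::real) ^ clog m) = real (clog m)" by (simp add: log_nat_power)
        finally show ?thesis .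
      qed
      also have "clog m \<le> m - 1"
      proof (rule clog_le)
        have "m - 1 < 2 ^ (m - 1)" by (rule less_exp)
        then show "m \<le> 2 ^ (m - 1)" using m1 by linarith
      qed
      then have "real (clog m) \<le> real n - real (Suc i)" using mr m1 by simp
      finally have a: "Hs n (Suc i) \<le> real n - real (Suc i)" unfolding Hs_Suc .
      have "0 < Hs n (Suc i)" unfolding Hs_Suc using h1 by simp
      then show ?thesis using a by blast
    qed
  qed
  from claim[of n] show ?thesis by auto
qed

lemma Hs_log_star: "Hs n (log_star n) \<le> 1"
  unfolding log_star_def Hs_def[symmetric] using Hs_exists by (rule LeastI_ex)

definition k1 :: "nat \<Rightarrow> real \<Rightarrow> nat" where "k1 n \<epsilon> = (LEAST j. bs n \<epsilon> j \<le> Bp \<epsilon>)"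

lemma bs_ls: "bs n \<epsilon> (2 * log_star n) \<le> Bp \<epsilon>"
proof -
  have "real (bs n \<epsilon> (2 * log_star n)) \<le> max (real (Bp \<epsilon>)) (Hs n (log_star n))" by (rule bs_bound)
  also have "\<dots> \<le> real (Bp \<epsilon>)" using Hs_log_star[of n] Bp_ge[of \<epsilon>] by simp
  finally show ?thesis by simp
qed

lemma k1_le: "k1 n \<epsilon> \<le> 2 * log_star n"
  unfolding k1_def using bs_ls by (rule Least_le)

lemma k1_prop: "bs n \<epsilon> (k1 n \<epsilon>) \<le> Bp \<epsilon>"
  unfolding k1_def using bs_ls by (rule LeastI)

lemma k1_before: "j < k1 n \<epsilon> \<Longrightarrow> Bp \<epsilon> < bs n \<epsilon> j"
  unfolding k1_def using not_less_Least not_le by blast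

lemma bs_half: "j < k1 n \<epsilon> \<Longrightarrow> 2 * bs n \<epsilon> (Suc j) \<le> bs n \<epsilon> j"
  unfolding bs_Suc using k1_before rb_half by blast

lemma bs_le0: "j \<le> k1 n \<epsilon> \<Longrightarrow> bs n \<epsilon> j \<le> bs n \<epsilon> 0"
proof (induction j)
  case 0 then show ?case by simp
next
  case (Suc j)
  then have "2 * bs n \<epsilon> (Suc j) \<le> bs n \<epsilon> j" by (intro bs_half) simp
  then show ?case using Suc by simp
qed

lemma bs_pos: "1 \<le> n \<Longrightarrow> 1 \<le> bs n \<epsilon> j"
proof (cases j)
  case 0
  assume "1 \<le> n"
  then show ?thesis unfolding 0 bs_0 by (intro clog_pos) simp
next
  case (Suc j') then show ?thesis by (simp add: bs_Suc rb_def)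
qed



definition qA :: "real \<Rightarrow> nat \<Rightarrow> nat" where
  "qA \<epsilon> b = (SOME p. prime p \<and> 4*b*b*Lp \<epsilon> < p \<and> p \<le> 2^20*(4*b*b*Lp \<epsilon>))"
definition qF :: "real \<Rightarrow> nat" where
  "qF \<epsilon> = (SOME p. prime p \<and> 4096*Lp \<epsilon> < p \<and> p \<le> 2^20*(4096*Lp \<epsilon>))"

lemma qA_props: assumes "1 \<le> b" "0 < \<epsilon>" "\<epsilon> < 1"
  shows "prime (qA \<epsilon> b) \<and> 4*b*b*Lp \<epsilon> < qA \<epsilon> b \<and> qA \<epsilon> b \<le> 2^20*(4*b*b*Lp \<epsilon>)"
proof -
  have "1 \<le> 4*b*b*Lp \<epsilon>" using assms Lp_props(1)[of \<epsilon>] by simp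
  from weak_bertrand[OF this] show ?thesis unfolding qA_def by (rule someI_ex)
qed

lemma qF_props: assumes "0 < \<epsilon>" "\<epsilon> < 1"
  shows "prime (qF \<epsilon>) \<and> 4096*Lp \<epsilon> < qF \<epsilon> \<and> qF \<epsilon> \<le> 2^20*(4096*Lp \<epsilon>)"
proof -
  have "1 \<le> 4096*Lp \<epsilon>" using assms Lp_props(1)[of \<epsilon>] by simp
  from weak_bertrand[OF this] show ?thesis unfolding qF_def by (rule someI_ex)
qed

definition qpar :: "nat \<Rightarrow> real \<Rightarrow> nat \<Rightarrow> nat" where
  "qpar n \<epsilon> j = (if j < k1 n \<epsilon> then qA \<epsilon> (bs n \<epsilon> j) else qF \<epsilon>)"
definition dpar :: "nat \<Rightarrow> real \<Rightarrow> nat \<Rightarrow> nat" where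
  "dpar n \<epsilon> j = (if j < k1 n \<epsilon> then bs n \<epsilon> j - 1 else 1023)"

primrec colseq :: "nat \<Rightarrow> real \<Rightarrow> (nat \<Rightarrow> nat \<Rightarrow> real) \<Rightarrow> nat \<Rightarrow> nat \<Rightarrow> nat" where
  "colseq n \<epsilon> w 0 = (\<lambda>v. v)"
| "colseq n \<epsilon> w (Suc t) = (\<lambda>v. stepc n (w v) (colseq n \<epsilon> w t) (colseq n \<epsilon> w t v) (qpar n \<epsilon> t) (dpar n \<epsilon> t))"

lemma wdeg_nonneg: "weighted_graph n w \<Longrightarrow> 0 \<le> wdeg n w v"
  unfolding wdeg_def using weighted_graph_nonneg by (simp add: sum_nonneg)

lemma wdefect_id: assumes "weighted_graph n w" "v \<in> {1..n}" shows "wdefect n w (\<lambda>v. v) v = 0"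
proof -
  have "{u \<in> {1..n}. u = v} = {v}" using assms by auto
  then show ?thesis unfolding wdefect_def using assms unfolding weighted_graph_def by simp
qed

lemma sq_bound:
  assumes "q \<le> 2^20 * (4*b*b*L)"
  shows "q * q \<le> 2 ^ (44 + 4 * clog b + 2 * clog L)"
proof -
  have b: "b \<le> 2 ^ clog b" and L: "L \<le> 2 ^ clog L" by (rule clog_ge)+
  have e1: "(2::nat)^20 * (4*b*b*L) = 2^22 * (b*b*L)" by simp
  have e2: "(2::nat) ^ (22 + 2 * clog b + clog L) = 2^22 * (2 ^ clog b * 2 ^ clog b * 2 ^ clog L)"
    by (simp only: power_add mult_2 mult.assoc)
  have "q \<le> 2^22 * (b*b*L)" using assms unfolding e1 .
  also have "\<dots> \<le> 2^22 * (2 ^ clog b * 2 ^ clog b * 2 ^ clog L)"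
    using b L by (intro mult_le_mono2 mult_le_mono) auto
  finally have q: "q \<le> 2 ^ (22 + 2 * clog b + clog L)" unfolding e2 .
  have "q * q \<le> 2 ^ (22 + 2 * clog b + clog L) * 2 ^ (22 + 2 * clog b + clog L)"
    by (rule mult_le_mono[OF q q])
  also have "\<dots> = 2 ^ ((22 + 2 * clog b + clog L) + (22 + 2 * clog b + clog L))" by (simp only: power_add)
  also have "(22 + 2 * clog b + clog L) + (22 + 2 * clog b + clog L) = 44 + 4 * clog b + 2 * clog L" by simp
  finally show ?thesis .
qed

lemma inv:
  assumes wg: "weighted_graph n w" and n: "1 \<le> n" and e: "0 < \<epsilon>" "\<epsilon> < 1"
  shows "j \<le> k1 n \<epsilon> \<Longrightarrow> (\<forall>v\<in>{1..n}. colseq n \<epsilon> w j v < 2 ^ bs n \<epsilon> j) \<and>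
     (\<forall>v\<in>{1..n}. wdefect n w (colseq n \<epsilon> w j) v \<le> \<epsilon> / (4 * real (bs n \<epsilon> j)) * wdeg n w v)"
proof (induction j)
  case 0
  have "\<forall>v\<in>{1..n}. v < 2 ^ bs n \<epsilon> 0"
  proof
    fix v assume "v \<in> {1..n}"
    then have "v < n + 1" by simp
    also have "n + 1 \<le> 2 ^ clog (n+1)" by (rule clog_ge)
    finally show "v < 2 ^ bs n \<epsilon> 0" by (simp add: bs_0)
  qed
  moreover have "\<forall>v\<in>{1..n}. wdefect n w (\<lambda>v. v) v \<le> \<epsilon> / (4 * real (bs n \<epsilon> 0)) * wdeg n w v"
    using wdefect_id[OF wg] wdeg_nonneg[OF wg] e by simp
  ultimately show ?case by simp
next
  case (Suc j)
  then have j: "j < k1 n \<epsilon>" by simp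
  with Suc have IH: "\<forall>v\<in>{1..n}. colseq n \<epsilon> w j v < 2 ^ bs n \<epsilon> j"
     "\<forall>v\<in>{1..n}. wdefect n w (colseq n \<epsilon> w j) v \<le> \<epsilon> / (4 * real (bs n \<epsilon> j)) * wdeg n w v" by auto
  define b where "b = bs n \<epsilon> j"
  define q where "q = qA \<epsilon> b"
  have b1: "1 \<le> b" unfolding b_def using bs_pos[OF n] .
  have qp: "prime q" "4*b*b*Lp \<epsilon> < q" "q \<le> 2^20*(4*b*b*Lp \<epsilon>)"
    using qA_props[OF b1 e] unfolding q_def by auto
  have qq: "qpar n \<epsilon> j = q" "dpar n \<epsilon> j = b - 1" unfolding qpar_def dpar_def q_def b_def using j by auto
  have sd: "Suc (b - 1) = b" using b1 by simp
  have q2: "2 \<le> q" using qp(1) prime_ge_2_nat by blast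
  have col: "\<forall>u\<in>{1..n}. colseq n \<epsilon> w j u < q ^ Suc (b - 1)"
  proof
    fix u assume "u \<in> {1..n}"
    then have "colseq n \<epsilon> w j u < 2 ^ b" using IH b_def by simp
    also have "(2::nat) ^ b \<le> q ^ b" using q2 by (rule power_mono) simp
    finally show "colseq n \<epsilon> w j u < q ^ Suc (b - 1)" using sd by simp
  qed
  have b'half: "2 * bs n \<epsilon> (Suc j) \<le> b" unfolding b_def using bs_half[OF j] .
  have b'1: "1 \<le> bs n \<epsilon> (Suc j)" using bs_pos[OF n] .
  have nnw: "\<forall>u. 0 \<le> w v u" for v using wg weighted_graph_nonneg by blast
  have cols: "\<forall>v\<in>{1..n}. colseq n \<epsilon> w (Suc j) v < 2 ^ bs n \<epsilon> (Suc j)"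
  proof
    fix v assume v: "v \<in> {1..n}"
    have "colseq n \<epsilon> w (Suc j) v < q * q"
      unfolding colseq.simps qq using stepc_less[OF qp(1) col col[rule_format, OF v] nnw] .
    also have "q * q \<le> 2 ^ (44 + 4 * clog b + 2 * clog (Lp \<epsilon>))" using qp(3) by (rule sq_bound)
    also have "\<dots> = 2 ^ bs n \<epsilon> (Suc j)" unfolding bs_Suc rb_def b_def ..
    finally show "colseq n \<epsilon> w (Suc j) v < 2 ^ bs n \<epsilon> (Suc j)" .
  qed
  have dq: "real (b - 1) / real q \<le> \<epsilon> / (4 * real b)"
  proof -
    have L: "1/\<epsilon> \<le> real (Lp \<epsilon>)" using Lp_props(2)[OF e] .
    have "real (4*b*b*Lp \<epsilon>) < real q" using qp(2) by linarith
    then have "4 * real b * real b * real (Lp \<epsilon>) < real q" by simp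
    moreover have "4 * real b * real b * (1/\<epsilon>) \<le> 4 * real b * real b * real (Lp \<epsilon>)"
      using L by (intro mult_left_mono) auto
    ultimately have qb: "4 * real b * real b / \<epsilon> < real q" by simp
    have qpos: "0 < real q" using q2 by simp
    have bpos: "0 < real b" using b1 by simp
    have k: "4 * real b * real b < \<epsilon> * real q" using qb e by (simp add: divide_less_eq mult.commute)
    have "real (b - 1) / real q \<le> real b / real q" using q2 by (intro divide_right_mono) auto
    also have "real b / real q \<le> \<epsilon> / (4 * real b)"
      using k qpos bpos by (simp add: field_simps)
    finally show ?thesis .
  qed
  have defs: "\<forall>v\<in>{1..n}. wdefect n w (colseq n \<epsilon> w (Suc j)) v \<le> \<epsilon> / (4 * real (bs n \<epsilon> (Suc j))) * wdeg n w v"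
  proof
    fix v assume v: "v \<in> {1..n}"
    have W: "0 \<le> wdeg n w v" by (rule wdeg_nonneg[OF wg])
    have "colseq n \<epsilon> w (Suc j) = (\<lambda>u. stepc n (w u) (colseq n \<epsilon> w j) (colseq n \<epsilon> w j u) q (b - 1))"
      unfolding colseq.simps qq ..
    then have "wdefect n w (colseq n \<epsilon> w (Suc j)) v \<le> wdefect n w (colseq n \<epsilon> w j) v + real (b - 1) / real q * wdeg n w v"
      using defect_step[OF wg qp(1) col v] by simp
    also have "\<dots> \<le> \<epsilon> / (4 * real b) * wdeg n w v + \<epsilon> / (4 * real b) * wdeg n w v"
      using IH(2) v dq W b_def by (intro add_mono mult_right_mono) auto
    also have "\<dots> = \<epsilon> / (2 * real b) * wdeg n w v" using b1 by (simp add: field_simps)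
    also have "\<dots> \<le> \<epsilon> / (4 * real (bs n \<epsilon> (Suc j))) * wdeg n w v"
    proof (rule mult_right_mono[OF _ W])
      have "4 * real (bs n \<epsilon> (Suc j)) \<le> 2 * real b" using b'half by linarith
      then show "\<epsilon> / (2 * real b) \<le> \<epsilon> / (4 * real (bs n \<epsilon> (Suc j)))"
        using e b'1 by (intro divide_left_mono) auto
    qed
    finally show "wdefect n w (colseq n \<epsilon> w (Suc j)) v \<le> \<epsilon> / (4 * real (bs n \<epsilon> (Suc j))) * wdeg n w v" .
  qed
  show ?case using cols defs by blast
qed



lemma final_step:
  assumes wg: "weighted_graph n w" and n: "1 \<le> n" and e: "0 < \<epsilon>" "\<epsilon> < 1"
  shows "\<forall>v\<in>{1..n}. colseq n \<epsilon> w (Suc (k1 n \<epsilon>)) v < 2^64 * Lp \<epsilon> * Lp \<epsilon> \<and>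
     wdefect n w (colseq n \<epsilon> w (Suc (k1 n \<epsilon>))) v \<le> \<epsilon> * wdeg n w v"
proof
  fix v assume v: "v \<in> {1..n}"
  let ?k = "k1 n \<epsilon>"
  have I: "\<forall>v\<in>{1..n}. colseq n \<epsilon> w ?k v < 2 ^ bs n \<epsilon> ?k"
     "\<forall>v\<in>{1..n}. wdefect n w (colseq n \<epsilon> w ?k) v \<le> \<epsilon> / (4 * real (bs n \<epsilon> ?k)) * wdeg n w v"
    using inv[OF wg n e, of ?k] by auto
  define q where "q = qF \<epsilon>"
  define L where "L = Lp \<epsilon>"
  have qp: "prime q" "4096*L < q" "q \<le> 2^20*(4096*L)" using qF_props[OF e] unfolding q_def L_def by auto
  have qq: "qpar n \<epsilon> ?k = q" "dpar n \<epsilon> ?k = 1023" unfolding qpar_def dpar_def q_def by auto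
  have L2: "2 \<le> L" unfolding L_def using Lp_props(1)[OF e] .
  have cl1: "1 \<le> clog L" using clog_pos[OF L2] .
  have "2 ^ (clog L - 1) < L" using clog_lt[OF cl1] .
  moreover have "(2::nat) ^ (clog L + 1) = 2 ^ (clog L - 1) * 4"
  proof -
    have "clog L + 1 = (clog L - 1) + 2" using cl1 by simp
    then show ?thesis by (simp only: power_add) simp
  qed
  ultimately have "2 ^ (clog L + 1) < 4 * L" by simp
  then have hq: "2 ^ (clog L + 1) < q" using qp(2) by linarith
  have col: "\<forall>u\<in>{1..n}. colseq n \<epsilon> w ?k u < q ^ Suc 1023"
  proof
    fix u assume u: "u \<in> {1..n}"
    have "colseq n \<epsilon> w ?k u < 2 ^ bs n \<epsilon> ?k" using I(1) u by blast
    also have "(2::nat) ^ bs n \<epsilon> ?k \<le> 2 ^ Bp \<epsilon>" using k1_prop by (intro power_increasing) auto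
    also have "(2::nat) ^ Bp \<epsilon> = (2 ^ (clog L + 1)) ^ 1024"
    proof -
      have "Bp \<epsilon> = (clog L + 1) * 1024" unfolding Bp_def L_def by simp
      then show ?thesis by (simp only: power_mult)
    qed
    also have "\<dots> \<le> q ^ 1024" using hq by (intro power_mono) auto
    finally show "colseq n \<epsilon> w ?k u < q ^ Suc 1023" by simp
  qed
  have nnw: "\<forall>u. 0 \<le> w v u" for v using wg weighted_graph_nonneg by blast
  have eqc: "colseq n \<epsilon> w (Suc ?k) = (\<lambda>u. stepc n (w u) (colseq n \<epsilon> w ?k) (colseq n \<epsilon> w ?k u) q 1023)"
    unfolding colseq.simps qq ..
  have "colseq n \<epsilon> w (Suc ?k) v < q * q"
    unfolding eqc using stepc_less[OF qp(1) col col[rule_format, OF v] nnw] .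
  also have "q * q \<le> (2^32 * L) * (2^32 * L)" using qp(3) by (intro mult_le_mono) auto
  also have "\<dots> = 2^64 * L * L" by simp
  finally have c1: "colseq n \<epsilon> w (Suc ?k) v < 2^64 * Lp \<epsilon> * Lp \<epsilon>" unfolding L_def .
  have W: "0 \<le> wdeg n w v" by (rule wdeg_nonneg[OF wg])
  have b1: "1 \<le> bs n \<epsilon> ?k" using bs_pos[OF n] .
  have t1: "\<epsilon> / (4 * real (bs n \<epsilon> ?k)) \<le> \<epsilon> / 4" using b1 e by (intro divide_left_mono) auto
  have t2: "real 1023 / real q \<le> \<epsilon> / 4"
  proof -
    have Le: "1/\<epsilon> \<le> real L" unfolding L_def using Lp_props(2)[OF e] .
    have "4096 * real L < real q" using qp(2) by linarith
    moreover have "4096 * (1/\<epsilon>) \<le> 4096 * real L" using Le by simp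
    moreover have "4096 / \<epsilon> = 4096 * (1/\<epsilon>)" by simp
    ultimately have "4096 / \<epsilon> < real q" by linarith
    then have k: "4096 < \<epsilon> * real q" using e by (simp add: divide_less_eq mult.commute)
    have qpos: "0 < real q" using qp(1) prime_gt_0_nat by simp
    show ?thesis using k qpos e by (simp add: field_simps)
  qed
  have "wdefect n w (colseq n \<epsilon> w (Suc ?k)) v \<le> wdefect n w (colseq n \<epsilon> w ?k) v + real 1023 / real q * wdeg n w v"
    unfolding eqc using defect_step[OF wg qp(1) col v] by simp
  also have "\<dots> \<le> \<epsilon> / 4 * wdeg n w v + \<epsilon> / 4 * wdeg n w v"
  proof (rule add_mono)
    show "wdefect n w (colseq n \<epsilon> w ?k) v \<le> \<epsilon> / 4 * wdeg n w v"
      using I(2) v t1 W by (meson mult_right_mono order_trans)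
    show "real 1023 / real q * wdeg n w v \<le> \<epsilon> / 4 * wdeg n w v" using t2 W by (rule mult_right_mono)
  qed
  also have "\<dots> \<le> \<epsilon> * wdeg n w v" using W e by (simp add: field_simps)
  finally show "colseq n \<epsilon> w (Suc ?k) v < 2^64 * Lp \<epsilon> * Lp \<epsilon> \<and>
     wdefect n w (colseq n \<epsilon> w (Suc ?k)) v \<le> \<epsilon> * wdeg n w v" using c1 by simp
qed



definition inif :: "nat \<Rightarrow> real \<Rightarrow> nat \<Rightarrow> (nat \<Rightarrow> real) \<Rightarrow> real list" where
  "inif n \<epsilon> v row = 0 # real v # map row [0..<n+1]"
definition sendf :: "nat \<Rightarrow> real \<Rightarrow> real list \<Rightarrow> nat \<Rightarrow> nat" where
  "sendf n \<epsilon> s u = nat \<lfloor>s ! 1\<rfloor>"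
definition updf :: "nat \<Rightarrow> real \<Rightarrow> real list \<Rightarrow> (nat \<Rightarrow> nat) \<Rightarrow> real list" where
  "updf n \<epsilon> s m = (s ! 0 + 1) # real (stepc n (\<lambda>u. s ! (u+2)) m (nat \<lfloor>s ! 1\<rfloor>)
      (qpar n \<epsilon> (nat \<lfloor>s ! 0\<rfloor>)) (dpar n \<epsilon> (nat \<lfloor>s ! 0\<rfloor>))) # drop 2 s"
definition outf :: "nat \<Rightarrow> real \<Rightarrow> real list \<Rightarrow> nat" where
  "outf n \<epsilon> s = nat \<lfloor>s ! 1\<rfloor>"

lemma nth_state: "u \<le> n \<Longrightarrow> (a # b # map f [0..<n+1]) ! (u+2) = f u"
  by (simp del: upt_Suc)

lemma sim:
  assumes wg: "weighted_graph n w"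
  shows "congest_state inif sendf updf n \<epsilon> w t v = real t # real (colseq n \<epsilon> w t v) # map (\<lambda>u. w v u) [0..<n+1]"
proof (induction t arbitrary: v)
  case 0 then show ?case by (simp add: inif_def)
next
  case (Suc t)
  let ?S = "congest_state inif sendf updf n \<epsilon> w t"
  let ?m = "\<lambda>u. if 0 < w u v then sendf n \<epsilon> (?S u) v else 0"
  have sx: "\<And>u. sendf n \<epsilon> (?S u) v = colseq n \<epsilon> w t u" unfolding Suc.IH sendf_def by simp
  have st: "stepc n (\<lambda>u. ?S v ! (u+2)) ?m (colseq n \<epsilon> w t v) (qpar n \<epsilon> t) (dpar n \<epsilon> t)
      = stepc n (w v) (colseq n \<epsilon> w t) (colseq n \<epsilon> w t v) (qpar n \<epsilon> t) (dpar n \<epsilon> t)"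
  proof (rule stepc_cong)
    show "\<forall>u\<in>{1..n}. ?S v ! (u+2) = w v u"
      unfolding Suc.IH using nth_state by auto
    show "\<forall>u\<in>{1..n}. ?S v ! (u+2) \<noteq> 0 \<longrightarrow> ?m u = colseq n \<epsilon> w t u"
    proof (intro ballI impI)
      fix u assume u: "u \<in> {1..n}" and nz: "?S v ! (u+2) \<noteq> 0"
      have "?S v ! (u+2) = w v u" unfolding Suc.IH using nth_state u by auto
      then have "w v u \<noteq> 0" using nz by simp
      moreover have "0 \<le> w v u" using wg weighted_graph_nonneg by blast
      moreover have "w u v = w v u" using wg unfolding weighted_graph_def by blast
      ultimately show "?m u = colseq n \<epsilon> w t u" by (simp add: sx)
    qed
  qed
  have S: "?S v = real t # real (colseq n \<epsilon> w t v) # map (\<lambda>u. w v u) [0..<n+1]" by (rule Suc.IH)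
  have f0: "?S v ! 0 = real t" and f1: "?S v ! 1 = real (colseq n \<epsilon> w t v)"
    and f2: "drop 2 (?S v) = map (\<lambda>u. w v u) [0..<n+1]" unfolding S by simp_all
  have e1: "congest_state inif sendf updf n \<epsilon> w (Suc t) v = updf n \<epsilon> (?S v) ?m"
    by (simp only: congest_state.simps)
  also have "\<dots> = (real t + 1) # real (stepc n (\<lambda>u. ?S v ! (u+2)) ?m (colseq n \<epsilon> w t v) (qpar n \<epsilon> t) (dpar n \<epsilon> t)) # map (\<lambda>u. w v u) [0..<n+1]"
    unfolding updf_def f0 f1 f2 floor_of_nat nat_int ..
  also have "\<dots> = real (Suc t) # real (colseq n \<epsilon> w (Suc t) v) # map (\<lambda>u. w v u) [0..<n+1]"
    unfolding st by simp
  finally show ?case .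
qed



lemma msg_bound: assumes "1 \<le> n" shows "(2::nat) ^ clog (n+1) < (n+1)^2"
proof -
  have c1: "1 \<le> clog (n+1)" using assms by (intro clog_pos) simp
  have "2 ^ (clog (n+1) - 1) < n + 1" using clog_lt[OF c1] .
  moreover have "(2::nat) ^ clog (n+1) = 2 * 2 ^ (clog (n+1) - 1)"
    using c1 by (metis Suc_diff_1 less_le_trans power_Suc zero_less_one)
  ultimately have "(2::nat) ^ clog (n+1) < 2 * (n+1)" by simp
  also have "2 * (n+1) \<le> (n+1)^2" using assms by (simp add: power2_eq_square)
  finally show ?thesis .
qed

theorem mainTheorem2:
  shows "\<exists>(Cmsg::nat) (Ccol::real) (Crnd::real).
     \<exists>(init :: nat \<Rightarrow> real \<Rightarrow> nat \<Rightarrow> (nat \<Rightarrow> real) \<Rightarrow> real list)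
      (send :: nat \<Rightarrow> real \<Rightarrow> real list \<Rightarrow> nat \<Rightarrow> nat)
      (upd :: nat \<Rightarrow> real \<Rightarrow> real list \<Rightarrow> (nat \<Rightarrow> nat) \<Rightarrow> real list)
      (out :: nat \<Rightarrow> real \<Rightarrow> real list \<Rightarrow> nat)
      (T :: nat \<Rightarrow> real \<Rightarrow> nat).
     \<forall>(n::nat) (w :: nat \<Rightarrow> nat \<Rightarrow> real) (\<epsilon>::real).
       weighted_graph n w \<and> 0 < \<epsilon> \<and> \<epsilon> < 1 \<longrightarrow>
         real (T n \<epsilon>) \<le> Crnd * (real (log_star n) + 1) \<and>
         (\<forall>t < T n \<epsilon>. \<forall>u v. 0 < w u v \<longrightarrow>
            send n \<epsilon> (congest_state init send upd n \<epsilon> w t u) v < (n + 1) ^ Cmsg) \<and>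
         (let \<phi> = (\<lambda>v. out n \<epsilon> (congest_state init send upd n \<epsilon> w (T n \<epsilon>) v)) in
            (\<forall>v\<in>{1..n}. real (\<phi> v) < Ccol / \<epsilon>\<^sup>2) \<and>
            weighted_defective_coloring n w \<epsilon> \<phi>)"
proof (rule exI[of _ "2::nat"], rule exI[of _ "2^66::real"], rule exI[of _ "2::real"],
    rule exI[of _ inif], rule exI[of _ sendf], rule exI[of _ updf], rule exI[of _ outf],
    rule exI[of _ "\<lambda>n \<epsilon>. Suc (k1 n \<epsilon>)"], intro allI impI)
  fix n :: nat and w :: "nat \<Rightarrow> nat \<Rightarrow> real" and \<epsilon> :: real
  assume H: "weighted_graph n w \<and> 0 < \<epsilon> \<and> \<epsilon> < 1"
  then have wg: "weighted_graph n w" and e: "0 < \<epsilon>" "\<epsilon> < 1" by auto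
  let ?T = "\<lambda>n \<epsilon>. Suc (k1 n \<epsilon>)"
  let ?S = "congest_state inif sendf updf n \<epsilon> w"
  have P1: "real (?T n \<epsilon>) \<le> 2 * (real (log_star n) + 1)" using k1_le[of n \<epsilon>] by simp
  have P2: "\<forall>t < ?T n \<epsilon>. \<forall>u v. 0 < w u v \<longrightarrow> sendf n \<epsilon> (?S t u) v < (n + 1) ^ 2"
  proof (intro allI impI)
    fix t u v assume t: "t < ?T n \<epsilon>" and wp: "0 < w u v"
    have "w u v \<noteq> 0" using wp by simp
    then have u: "u \<in> {1..n}" using wg unfolding weighted_graph_def by blast
    then have n: "1 \<le> n" by simp
    have "sendf n \<epsilon> (?S t u) v = colseq n \<epsilon> w t u" unfolding sim[OF wg] sendf_def by simp
    also have "\<dots> < 2 ^ bs n \<epsilon> t" using inv[OF wg n e, of t] t u by auto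
    also have "(2::nat) ^ bs n \<epsilon> t \<le> 2 ^ bs n \<epsilon> 0" using bs_le0[of t n \<epsilon>] t by (intro power_increasing) auto
    also have "\<dots> < (n+1)^2" unfolding bs_0 using msg_bound[OF n] .
    finally show "sendf n \<epsilon> (?S t u) v < (n + 1) ^ 2" .
  qed
  have phi: "(\<lambda>v. outf n \<epsilon> (?S (?T n \<epsilon>) v)) = colseq n \<epsilon> w (?T n \<epsilon>)"
    unfolding sim[OF wg] outf_def by simp
  have P3: "(\<forall>v\<in>{1..n}. real (colseq n \<epsilon> w (?T n \<epsilon>) v) < 2^66 / \<epsilon>\<^sup>2) \<and>
            weighted_defective_coloring n w \<epsilon> (colseq n \<epsilon> w (?T n \<epsilon>))"
  proof (cases "n = 0")
    case True then show ?thesis unfolding weighted_defective_coloring_def by simp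
  next
    case False
    then have n: "1 \<le> n" by simp
    note F = final_step[OF wg n e]
    have "\<forall>v\<in>{1..n}. real (colseq n \<epsilon> w (?T n \<epsilon>) v) < 2^66 / \<epsilon>\<^sup>2"
    proof
      fix v assume v: "v \<in> {1..n}"
      have "colseq n \<epsilon> w (?T n \<epsilon>) v < 2^64 * Lp \<epsilon> * Lp \<epsilon>" using F v by blast
      then have "real (colseq n \<epsilon> w (?T n \<epsilon>) v) < real (2^64 * Lp \<epsilon> * Lp \<epsilon>)"
        by (simp only: of_nat_less_iff)
      also have "real (2^64 * Lp \<epsilon> * Lp \<epsilon>) = 2^64 * real (Lp \<epsilon>) * real (Lp \<epsilon>)" by simp
      also have "\<dots> \<le> 2^64 * (2/\<epsilon>) * (2/\<epsilon>)"
        using Lp_props(3)[OF e] e by (intro mult_mono) auto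
      also have "\<dots> = 2^66 / \<epsilon>\<^sup>2" by (simp add: power2_eq_square)
      finally show "real (colseq n \<epsilon> w (?T n \<epsilon>) v) < 2^66 / \<epsilon>\<^sup>2" .
    qed
    moreover have "weighted_defective_coloring n w \<epsilon> (colseq n \<epsilon> w (?T n \<epsilon>))"
      unfolding weighted_defective_coloring_def using F by blast
    ultimately show ?thesis by blast
  qed
  show "real (?T n \<epsilon>) \<le> 2 * (real (log_star n) + 1) \<and>
         (\<forall>t < ?T n \<epsilon>. \<forall>u v. 0 < w u v \<longrightarrow>
            sendf n \<epsilon> (?S t u) v < (n + 1) ^ 2) \<and>
         (let \<phi> = (\<lambda>v. outf n \<epsilon> (?S (?T n \<epsilon>) v)) in
            (\<forall>v\<in>{1..n}. real (\<phi> v) < 2^66 / \<epsilon>\<^sup>2) \<and>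
            weighted_defective_coloring n w \<epsilon> \<phi>)"
    unfolding Let_def phi using P1 P2 P3 by blast
qed


end
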